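(* Let $\mathcal{F}_{2P_2}$ and $\mathcal{F}_{P_5}$ be as defined in the context. Then $\{C_7,C_9,C_{11},\ldots\}\subsetneq\mathcal{F}_{2P_2}$ and $\{C_7,C_9,C_{11},\ldots\}\subsetneq\mathcal{F}_{P_5}$. In particular, both $\mathcal{F}_{2P_2}$ and $\mathcal{F}_{P_5}$ are infinite.
   Context: All graphs are finite and simple. $C_n$ is the cycle on $n$ vertices, $P_5$ the path on $5$ vertices, and $2P_2$ the disjoint union of two edges. A graph is $H$-free if it has no induced subgraph isomorphic to $H$; for a set $\mathcal{F}$ of graphs, a graph is $\mathcal{F}$-free if it is $H$-free for every $H\in\mathcal{F}$. A graph $G=(V,E)$ is probe $H$-free if there is an independent set $N$ of $G$ and a set $F\subseteq\binom{N}{2}$ such that $(V,E\cup F)$ is $H$-free. The class of probe $H$-free graphs is closed under vertex deletion, so there is a unique minimal set of graphs $\mathcal{F}_H$ (up to isomorphism) such that a graph is probe $H$-free if and only if it is $\mathcal{F}_H$-free (equivalently, $\mathcal{F}_H$ is the set of minimal forbidden induced subgraphs: graphs that are not probe $H$-free but all of whose proper induced subgraphs are). *)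

theory Defs
  imports Main
begin

type_synonym 'a graph = "'a set \<times> 'a set set"

definition is_graph :: "'a graph \<Rightarrow> bool" where
  "is_graph G \<longleftrightarrow> finite (fst G) \<and> (\<forall>e\<in>snd G. e \<subseteq> fst G \<and> card e = 2)"

definition induced :: "'a graph \<Rightarrow> 'a set \<Rightarrow> 'a graph" where
  "induced G S = (S, {e \<in> snd G. e \<subseteq> S})"

definition graph_iso :: "'a graph \<Rightarrow> 'b graph \<Rightarrow> bool" where
  "graph_iso G H \<longleftrightarrow> (\<exists>f. bij_betw f (fst G) (fst H) \<and>
     (\<forall>x\<in>fst G. \<forall>y\<in>fst G. {x, y} \<in> snd G \<longleftrightarrow> {f x, f y} \<in> snd H))"

definition H_free :: "'a graph \<Rightarrow> 'b graph \<Rightarrow> bool" where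
  "H_free G H \<longleftrightarrow> \<not> (\<exists>S \<subseteq> fst G. graph_iso (induced G S) H)"

definition independent :: "'a graph \<Rightarrow> 'a set \<Rightarrow> bool" where
  "independent G N \<longleftrightarrow> N \<subseteq> fst G \<and> (\<forall>x\<in>N. \<forall>y\<in>N. {x, y} \<notin> snd G)"

definition probe_free :: "'a graph \<Rightarrow> 'b graph \<Rightarrow> bool" where
  "probe_free G H \<longleftrightarrow> (\<exists>N F. independent G N \<and> F \<subseteq> {e. e \<subseteq> N \<and> card e = 2} \<and>
       H_free (fst G, snd G \<union> F) H)"

text \<open>Membership in the family F_H of minimal forbidden induced subgraphs
  (considered up to isomorphism; graphs represented on natural-number vertices).\<close>
definition min_forbidden_probe :: "'b graph \<Rightarrow> nat graph \<Rightarrow> bool" where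
  "min_forbidden_probe H G \<longleftrightarrow> is_graph G \<and> \<not> probe_free G H \<and>
     (\<forall>S. S \<subset> fst G \<longrightarrow> probe_free (induced G S) H)"

definition cycle :: "nat \<Rightarrow> nat graph" where
  "cycle n = ({0..<n}, {{i, (i + 1) mod n} | i. i < n})"

definition path5 :: "nat graph" where
  "path5 = ({0..<5}, {{i, i + 1} | i. i < 4})"

definition twoP2 :: "nat graph" where
  "twoP2 = ({0, 1, 2, 3}, {{0, 1}, {2, 3}})"

end

theory Submission
  imports Defs
begin

lemma mod_shift_inj:
  assumes "n > 0" "p < q + n" "q < p + n"
  shows "((b + p) mod n = (b + q) mod (n::nat)) \<longleftrightarrow> p = q"
proof
  assume h: "(b + p) mod n = (b + q) mod n"
  show "p = q"
  proof (cases "p \<le> q")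
    case True
    then have "n dvd (b+q) - (b+p)" using h mod_eq_dvd_iff_nat[of "b+p" "b+q" n] by simp
    then have "n dvd q - p" by simp
    moreover have "q - p < n" using assms by simp
    ultimately have "q - p = 0" using dvd_imp_le not_less by blast
    then show ?thesis using True by simp
  next
    case False
    then have "n dvd (b+p) - (b+q)" using h mod_eq_dvd_iff_nat[of "b+q" "b+p" n] by simp
    then have "n dvd p - q" by simp
    moreover have "p - q < n" using assms by simp
    ultimately have "p - q = 0" using dvd_imp_le not_less by blast
    then show ?thesis using False by simp
  qed
qed simp

lemma cycle_edge_iff:
  assumes "u < n" "v < n"
  shows "{u, v} \<in> snd (cycle n) \<longleftrightarrow> v = (u + 1) mod n \<or> u = (v + 1) mod n"
  using assms unfolding cycle_def by (auto simp: doubleton_eq_iff)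

lemma cyc_adj:
  assumes "n \<ge> 7" "s \<le> t + 5" "t \<le> s + 5"
  shows "{(b + s) mod n, (b + t) mod n} \<in> snd (cycle n) \<longleftrightarrow> (s = Suc t \<or> t = Suc s)"
proof -
  have n0: "n > 0" using assms by simp
  have e1: "((b + s) mod n + 1) mod n = (b + (s+1)) mod n" by (simp add: mod_Suc_eq)
  have e2: "((b + t) mod n + 1) mod n = (b + (t+1)) mod n" by (simp add: mod_Suc_eq)
  have "{(b + s) mod n, (b + t) mod n} \<in> snd (cycle n) \<longleftrightarrow>
     (b + t) mod n = (b + (s+1)) mod n \<or> (b + s) mod n = (b + (t+1)) mod n"
    using cycle_edge_iff[of "(b + s) mod n" n "(b + t) mod n"] n0 e1 e2 by simp
  also have "\<dots> \<longleftrightarrow> t = s + 1 \<or> s = t + 1"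
    using mod_shift_inj[of n t "s+1" b] mod_shift_inj[of n s "t+1" b] assms by auto
  finally show ?thesis by auto
qed

lemma path5_edge:
  assumes "x < 5" "y < 5"
  shows "{x, y} \<in> snd path5 \<longleftrightarrow> (x = Suc y \<or> y = Suc x)"
  using assms unfolding path5_def by (auto simp: doubleton_eq_iff)

lemma twoP2_edge:
  "{x, y} \<in> snd twoP2 \<longleftrightarrow> ((x = 0 \<and> y = 1) \<or> (x = 1 \<and> y = 0) \<or> (x = 2 \<and> y = 3) \<or> (x = 3 \<and> y = 2))"
  unfolding twoP2_def by (auto simp: doubleton_eq_iff)

lemma not_free_by_embed:
  assumes inj: "inj_on g (fst H)" and sub: "g ` fst H \<subseteq> fst G"
    and adj: "\<forall>x\<in>fst H. \<forall>y\<in>fst H. ({g x, g y} \<in> snd G) = ({x, y} \<in> snd H)"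
  shows "\<not> H_free G H"
proof -
  let ?S = "g ` fst H"
  let ?f = "inv_into (fst H) g"
  have bg: "bij_betw g (fst H) ?S" using inj by (simp add: bij_betw_def)
  have bf: "bij_betw ?f ?S (fst H)" using bij_betw_inv_into[OF bg] .
  have "graph_iso (induced G ?S) H"
    unfolding graph_iso_def induced_def
  proof (rule exI[of _ ?f], intro conjI ballI)
    show "bij_betw ?f (fst (?S, {e \<in> snd G. e \<subseteq> ?S})) (fst H)" using bf by simp
  next
    fix a b assume a: "a \<in> fst (?S, {e \<in> snd G. e \<subseteq> ?S})" and b: "b \<in> fst (?S, {e \<in> snd G. e \<subseteq> ?S})"
    then obtain x y where x: "x \<in> fst H" "a = g x" and y: "y \<in> fst H" "b = g y" by auto
    have fx: "?f a = x" using x inj by (simp add: inv_into_f_f)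
    have fy: "?f b = y" using y inj by (simp add: inv_into_f_f)
    show "({a, b} \<in> snd (?S, {e \<in> snd G. e \<subseteq> ?S})) = ({?f a, ?f b} \<in> snd H)"
      using adj x y fx fy by auto
  qed
  then show ?thesis unfolding H_free_def using sub by blast
qed

lemma embed_of_iso:
  assumes "T \<subseteq> fst G" "graph_iso (induced G T) H"
  shows "\<exists>x. inj_on x (fst H) \<and> x ` fst H \<subseteq> fst G \<and>
     (\<forall>i\<in>fst H. \<forall>j\<in>fst H. ({x i, x j} \<in> snd G) = ({i, j} \<in> snd H))"
proof -
  obtain f where bf: "bij_betw f T (fst H)" and
    e: "\<forall>a\<in>T. \<forall>b\<in>T. {a, b} \<in> {e \<in> snd G. e \<subseteq> T} \<longleftrightarrow> {f a, f b} \<in> snd H"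
    using assms(2) unfolding graph_iso_def induced_def by auto
  let ?x = "inv_into T f"
  have bx: "bij_betw ?x (fst H) T" using bij_betw_inv_into[OF bf] .
  have fx: "\<And>i. i \<in> fst H \<Longrightarrow> f (?x i) = i" using bf by (meson bij_betw_inv_into_right)
  have xT: "\<And>i. i \<in> fst H \<Longrightarrow> ?x i \<in> T" using bx bij_betwE by blast
  show ?thesis
  proof (intro exI conjI ballI)
    show "inj_on ?x (fst H)" using bx bij_betw_def by blast
    show "?x ` fst H \<subseteq> fst G" using xT assms(1) by blast
  next
    fix i j assume i: "i \<in> fst H" and j: "j \<in> fst H"
    have "{?x i, ?x j} \<subseteq> T" using xT i j by simp
    then show "({?x i, ?x j} \<in> snd G) = ({i, j} \<in> snd H)"
      using e xT[OF i] xT[OF j] fx[OF i] fx[OF j] by auto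
  qed
qed

lemma split_free:
  assumes cov: "\<forall>x y. {x,y} \<in> snd G \<longrightarrow> x \<in> K \<or> y \<in> K"
    and cl: "\<forall>p\<in>K. \<forall>q\<in>K. p \<noteq> q \<longrightarrow> {p,q} \<in> snd G"
  shows "H_free G twoP2" "H_free G path5"
proof -
  have key: False if "x0 \<noteq> x2" "x0 \<noteq> x3" "x1 \<noteq> x2" "x1 \<noteq> x3"
    "{x0,x1} \<in> snd G" "{x2,x3} \<in> snd G" "{x0,x2} \<notin> snd G" "{x0,x3} \<notin> snd G"
    "{x1,x2} \<notin> snd G" "{x1,x3} \<notin> snd G" for x0 x1 x2 x3
    using that cov cl by metis
  show "H_free G twoP2"
    unfolding H_free_def
  proof
    assume "\<exists>S\<subseteq>fst G. graph_iso (induced G S) twoP2"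
    then obtain S where "S \<subseteq> fst G" "graph_iso (induced G S) twoP2" by blast
    from embed_of_iso[OF this] obtain x where inj: "inj_on x (fst twoP2)" and
      e: "\<forall>i\<in>fst twoP2. \<forall>j\<in>fst twoP2. ({x i, x j} \<in> snd G) = ({i, j} \<in> snd twoP2)" by blast
    have f: "fst twoP2 = {0,1,2,3}" by (simp add: twoP2_def)
    have d: "x 0 \<noteq> x 2" "x 0 \<noteq> x 3" "x 1 \<noteq> x 2" "x 1 \<noteq> x 3"
      using inj unfolding f inj_on_def by auto
    show False
      apply (rule key[OF d])
      using e unfolding f twoP2_edge by auto
  qed
  show "H_free G path5"
    unfolding H_free_def
  proof
    assume "\<exists>S\<subseteq>fst G. graph_iso (induced G S) path5"
    then obtain S where "S \<subseteq> fst G" "graph_iso (induced G S) path5" by blast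
    from embed_of_iso[OF this] obtain x where inj: "inj_on x (fst path5)" and
      e: "\<forall>i\<in>fst path5. \<forall>j\<in>fst path5. ({x i, x j} \<in> snd G) = ({i, j} \<in> snd path5)" by blast
    have f: "fst path5 = {0..<5}" by (simp add: path5_def)
    have d: "x 0 \<noteq> x 3" "x 0 \<noteq> x 4" "x 1 \<noteq> x 3" "x 1 \<noteq> x 4"
      using inj_onD[OF inj[unfolded f], of 0 3] inj_onD[OF inj[unfolded f], of 0 4]
        inj_onD[OF inj[unfolded f], of 1 3] inj_onD[OF inj[unfolded f], of 1 4] by auto
    have e': "\<forall>i<5. \<forall>j<5. ({x i, x j} \<in> snd G) = (i = Suc j \<or> j = Suc i)"
      using e unfolding f using path5_edge by auto
    show False
      apply (rule key[OF d])
      using e' by (auto simp del: One_nat_def)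
  qed
qed

lemma window_P5:
  assumes n: "n \<ge> 7" and v: "v = (\<lambda>s. (b + s) mod n)" and nf0: "\<forall>s<5. \<forall>t<5. {v (w+s), v (w+t)} \<notin> F"
  shows "\<not> H_free ({0..<n}, snd (cycle n) \<union> F) path5"
proof -
  have nf: "\<forall>s<5. \<forall>t<5. {(b+(w+s)) mod n, (b+(w+t)) mod n} \<notin> F" using nf0 v by simp
  show ?thesis
proof (rule not_free_by_embed[where g = "\<lambda>x. (b + (w + x)) mod n"])
  have f: "fst path5 = {0..<5}" by (simp add: path5_def)
  show "inj_on (\<lambda>x. (b + (w + x)) mod n) (fst path5)"
    unfolding f inj_on_def using mod_shift_inj[of n] n
    by (auto simp: add.assoc[symmetric])
  show "(\<lambda>x. (b + (w + x)) mod n) ` fst path5 \<subseteq> fst ({0..<n}, snd (cycle n) \<union> F)"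
    using n by auto
  show "\<forall>x\<in>fst path5. \<forall>y\<in>fst path5.
     ({(b + (w + x)) mod n, (b + (w + y)) mod n} \<in> snd ({0..<n}, snd (cycle n) \<union> F)) = ({x, y} \<in> snd path5)"
    unfolding f using nf n cyc_adj[of n] path5_edge by auto
qed
qed

definition qoff :: "nat \<Rightarrow> nat" where
  "qoff x = (if x = 0 then 5 else if x = 1 then 4 else if x = 2 then 3 else if x = 3 then 1 else 0)"

definition toff :: "nat \<Rightarrow> nat" where
  "toff x = (if x = 0 then 4 else if x = 1 then 5 else if x = 2 then 7 else 8)"

lemma vfacts:
  assumes n: "n \<ge> 7" and v: "v = (\<lambda>s. (b + s) mod n)"
  shows "\<And>s t. s \<le> 8 \<Longrightarrow> t \<le> 8 \<Longrightarrow> s \<le> t + 5 \<Longrightarrow> t \<le> s + 5 \<Longrightarrow> v s = v t \<longleftrightarrow> s = t"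
    and "\<And>s t. s \<le> 8 \<Longrightarrow> t \<le> 8 \<Longrightarrow> s \<le> t + 5 \<Longrightarrow> t \<le> s + 5 \<Longrightarrow> {v s, v t} \<in> snd (cycle n) \<longleftrightarrow> (s = Suc t \<or> t = Suc s)"
    and "\<And>s. s \<le> 8 \<Longrightarrow> {v s} \<notin> snd (cycle n)"
    and "\<And>s. v s < n"
proof -
  show a: "\<And>s t. s \<le> 8 \<Longrightarrow> t \<le> 8 \<Longrightarrow> s \<le> t + 5 \<Longrightarrow> t \<le> s + 5 \<Longrightarrow> {v s, v t} \<in> snd (cycle n) \<longleftrightarrow> (s = Suc t \<or> t = Suc s)"
    using cyc_adj[of n] n v by simp
  show "\<And>s t. s \<le> 8 \<Longrightarrow> t \<le> 8 \<Longrightarrow> s \<le> t + 5 \<Longrightarrow> t \<le> s + 5 \<Longrightarrow> v s = v t \<longleftrightarrow> s = t"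
    using mod_shift_inj[of n] n v by simp
  show "\<And>s. s \<le> 8 \<Longrightarrow> {v s} \<notin> snd (cycle n)" using a[of s s for s] by simp
  show "\<And>s. v s < n" using n v by simp
qed

lemma path_Q:
  assumes n: "n \<ge> 7" and v: "v = (\<lambda>s. (b + s) mod n)"
    and fq: "\<forall>s\<in>{0,1,3,4,5}. \<forall>t\<in>{0,1,3,4,5}. ({v s, v t} \<in> F \<longleftrightarrow> (s = 1 \<and> t = 3) \<or> (s = 3 \<and> t = 1))"
  shows "\<not> H_free ({0..<n}, snd (cycle n) \<union> F) path5"
proof (rule not_free_by_embed[where g = "\<lambda>x. v (qoff x)"])
  note vf = vfacts[OF n v]
  have f: "fst path5 = {0..<5}" by (simp add: path5_def)
  have x5: "x < 5 \<longleftrightarrow> x = 0 \<or> x = 1 \<or> x = 2 \<or> x = 3 \<or> x = 4" for x :: nat by auto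
  have s1: "{v s} \<notin> F" if "s \<in> {0,1,3,4,5}" for s using fq that by fastforce
  show "inj_on (\<lambda>x. v (qoff x)) (fst path5)"
    unfolding f inj_on_def atLeastLessThan_iff using vf(1) by (auto simp: x5 qoff_def)
  show "(\<lambda>x. v (qoff x)) ` fst path5 \<subseteq> fst ({0..<n}, snd (cycle n) \<union> F)"
    using vf(4) by auto
  show "\<forall>x\<in>fst path5. \<forall>y\<in>fst path5.
     ({v (qoff x), v (qoff y)} \<in> snd ({0..<n}, snd (cycle n) \<union> F)) = ({x, y} \<in> snd path5)"
  proof (intro ballI)
    fix x y :: nat assume "x \<in> fst path5" "y \<in> fst path5"
    then have xs: "x < 5" "y < 5" by (auto simp: f)
    have "({v (qoff x), v (qoff y)} \<in> snd (cycle n) \<union> F) = (x = Suc y \<or> y = Suc x)"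
      using xs(1) xs(2) unfolding x5
      apply (elim disjE)
      by (simp_all add: vf(2,3) fq s1 qoff_def)
    then show "({v (qoff x), v (qoff y)} \<in> snd ({0..<n}, snd (cycle n) \<union> F)) = ({x, y} \<in> snd path5)"
      using path5_edge[OF xs] by simp
  qed
qed

lemma twoP2_in:
  assumes n: "n \<ge> 7" and v: "v = (\<lambda>s. (b + s) mod n)"
    and nf: "\<forall>s\<in>{4,5,7,8}. \<forall>t\<in>{4,5,7,8}. {v s, v t} \<notin> F"
  shows "\<not> H_free ({0..<n}, snd (cycle n) \<union> F) twoP2"
proof (rule not_free_by_embed[where g = "\<lambda>x. v (toff x)"])
  note vf = vfacts[OF n v]
  have f: "fst twoP2 = {0,1,2,3}" by (simp add: twoP2_def)
  have s1: "{v s} \<notin> F" if "s \<in> {4,5,7,8}" for s using nf that by fastforce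
  show "inj_on (\<lambda>x. v (toff x)) (fst twoP2)"
    unfolding f inj_on_def using vf(1) by (auto simp: toff_def)
  show "(\<lambda>x. v (toff x)) ` fst twoP2 \<subseteq> fst ({0..<n}, snd (cycle n) \<union> F)"
    using vf(4) by auto
  show "\<forall>x\<in>fst twoP2. \<forall>y\<in>fst twoP2.
     ({v (toff x), v (toff y)} \<in> snd ({0..<n}, snd (cycle n) \<union> F)) = ({x, y} \<in> snd twoP2)"
  proof (intro ballI)
    fix x y :: nat assume "x \<in> fst twoP2" "y \<in> fst twoP2"
    then have xs: "x = 0 \<or> x = 1 \<or> x = 2 \<or> x = 3" "y = 0 \<or> y = 1 \<or> y = 2 \<or> y = 3" by (auto simp: f)
    have "({v (toff x), v (toff y)} \<in> snd (cycle n) \<union> F) = ((x = 0 \<and> y = 1) \<or> (x = 1 \<and> y = 0) \<or> (x = 2 \<and> y = 3) \<or> (x = 3 \<and> y = 2))"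
      using xs(1) xs(2)
      apply (elim disjE)
      by (simp_all add: vf(2,3) nf s1 toff_def)
    then show "({v (toff x), v (toff y)} \<in> snd ({0..<n}, snd (cycle n) \<union> F)) = ({x, y} \<in> snd twoP2)"
      using twoP2_edge by simp
  qed
qed

lemma cycle_edge_in: "i < n \<Longrightarrow> {i, (i + 1) mod n} \<in> snd (cycle n)"
  unfolding cycle_def by auto

lemma free_edge:
  assumes n: "n \<ge> 3" "odd n" and ind: "independent (cycle n) N"
  shows "\<exists>a<n. a \<notin> N \<and> (a + 1) mod n \<notin> N"
proof (rule ccontr)
  assume nt: "\<not> ?thesis"
  have cov: "a \<in> N \<or> (a + 1) mod n \<in> N" if "a < n" for a
    using nt that by blast
  have ie: "(a + 1) mod n \<notin> N" if "a < n" "a \<in> N" for a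
  proof -
    have "{a, (a + 1) mod n} \<in> snd (cycle n)" using cycle_edge_in that(1) .
    then show ?thesis using ind that(2) unfolding independent_def by blast
  qed
  have alt: "((a + 1) mod n \<in> N) = (a \<notin> N)" if "a < n" for a
    using cov[OF that] ie[OF that] by blast
  have cl: "i < n \<longrightarrow> (i \<in> N) = ((0 \<in> N) = even i)" for i
  proof (induction i)
    case 0 then show ?case by simp
  next
    case (Suc i)
    show ?case
    proof
      assume si: "Suc i < n"
      then have i: "i < n" by simp
      have m: "(i + 1) mod n = Suc i" using si by simp
      have "(Suc i \<in> N) = (i \<notin> N)" using alt[OF i] unfolding m .
      also have "\<dots> = (\<not> ((0 \<in> N) = even i))" using Suc.IH i by simp
      also have "\<dots> = ((0 \<in> N) = even (Suc i))" by simp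
      finally show "(Suc i \<in> N) = ((0 \<in> N) = even (Suc i))" .
    qed
  qed
  have l: "n - 1 < n" "even (n - 1)" using n by auto
  have A: "(n - 1 \<in> N) = (0 \<in> N)" using cl[of "n - 1"] l by simp
  have m0: "(n - 1 + 1) mod n = 0" using n by simp
  have B: "(0 \<in> N) = (n - 1 \<notin> N)" using alt[OF l(1)] unfolding m0 .
  show False using A B by blast
qed

lemma noF_gen:
  assumes noF: "\<And>s t. {v s, v t} \<in> F \<Longrightarrow> v s \<in> N \<and> v t \<in> N \<and> v s \<noteq> v t"
    and pos: "\<And>s. s \<in> A \<Longrightarrow> v s \<in> N \<Longrightarrow> s = p \<or> s = q"
    and pq: "v p \<in> N \<Longrightarrow> v q \<in> N \<Longrightarrow> {v p, v q} \<notin> F"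
  shows "\<forall>s\<in>A. \<forall>t\<in>A. {v s, v t} \<notin> F"
proof (intro ballI notI)
  fix s t assume s: "s \<in> A" and t: "t \<in> A" and st: "{v s, v t} \<in> F"
  from noF[OF st] have h: "v s \<in> N" "v t \<in> N" "v s \<noteq> v t" by auto
  from pos[OF s h(1)] pos[OF t h(2)] h(3) have "(s = p \<and> t = q) \<or> (s = q \<and> t = p)" by auto
  then show False using st pq h by (auto simp: insert_commute)
qed

lemma cycle_not_probe:
  assumes n: "n \<ge> 7" "odd n" and ind: "independent (cycle n) N"
    and Fs: "F \<subseteq> {e. e \<subseteq> N \<and> card e = 2}"
  shows "\<not> H_free ({0..<n}, snd (cycle n) \<union> F) path5 \<and> \<not> H_free ({0..<n}, snd (cycle n) \<union> F) twoP2"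
proof -
  have FN: "\<And>x y. {x,y} \<in> F \<Longrightarrow> x \<in> N \<and> y \<in> N" using Fs by auto
  have F1: "\<And>x. {x} \<notin> F" using Fs by fastforce
  have indE: "\<And>x y. x \<in> N \<Longrightarrow> y \<in> N \<Longrightarrow> {x,y} \<notin> snd (cycle n)"
    using ind unfolding independent_def by blast
  obtain a where a: "a < n" "a \<notin> N" "(a + 1) mod n \<notin> N" using free_edge[OF _ n(2) ind] n by auto
  define b where "b = a + n - 4"
  define v where "v = (\<lambda>s. (b + s) mod n)"
  note vf = vfacts[OF n(1) v_def]
  have noF: "\<And>s t. {v s, v t} \<in> F \<Longrightarrow> v s \<in> N \<and> v t \<in> N \<and> v s \<noteq> v t"
  proof -
    fix s t assume h: "{v s, v t} \<in> F"
    show "v s \<in> N \<and> v t \<in> N \<and> v s \<noteq> v t" using FN[OF h] F1 h by (cases "v s = v t") auto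
  qed
  have v4: "v 4 \<notin> N" using a n unfolding v_def b_def by simp
  have v5: "v 5 \<notin> N"
  proof -
    have e: "b + 5 = (a + 1) + n" using n unfolding b_def by simp
    have "(b + 5) mod n = ((a + 1) + n) mod n" by (simp only: e)
    then have "(b + 5) mod n = (a + 1) mod n" by (simp only: mod_add_self2)
    then show ?thesis using a(3) unfolding v_def by simp
  qed
  have vN: "\<And>s. s \<le> 7 \<Longrightarrow> v s \<in> N \<Longrightarrow> v (Suc s) \<notin> N"
  proof -
    fix s assume s: "s \<le> 7" "v s \<in> N"
    have "{v s, v (Suc s)} \<in> snd (cycle n)" using vf(2)[of s "Suc s"] s(1) by simp
    then show "v (Suc s) \<notin> N" using indE s(2) by blast
  qed
  have p2: "\<not> H_free ({0..<n}, snd (cycle n) \<union> F) twoP2"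
  proof (rule twoP2_in[OF n(1) v_def])
    show "\<forall>s\<in>{4, 5, 7, 8}. \<forall>t\<in>{4, 5, 7, 8}. {v s, v t} \<notin> F"
    proof (rule noF_gen[where p = 7 and q = 8])
      show "\<And>s t. {v s, v t} \<in> F \<Longrightarrow> v s \<in> N \<and> v t \<in> N \<and> v s \<noteq> v t" by (rule noF)
      show "\<And>s. s \<in> {4, 5, 7, 8} \<Longrightarrow> v s \<in> N \<Longrightarrow> s = 7 \<or> s = 8" using v4 v5 by auto
      show "v 7 \<in> N \<Longrightarrow> v 8 \<in> N \<Longrightarrow> {v 7, v 8} \<notin> F" using vN[of 7] by simp
    qed
  qed
  have p5: "\<not> H_free ({0..<n}, snd (cycle n) \<union> F) path5"
  proof (cases "v 3 \<in> N")
    case False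
    have "\<forall>s\<in>{3..3+4}. \<forall>t\<in>{3..3+4}. {v s, v t} \<notin> F"
      proof (rule noF_gen[where p = 6 and q = 7])
        show "\<And>s t. {v s, v t} \<in> F \<Longrightarrow> v s \<in> N \<and> v t \<in> N \<and> v s \<noteq> v t" by (rule noF)
        fix s assume "s \<in> {3..3+4}" "v s \<in> N"
        then show "s = 6 \<or> s = 7" using v4 v5 False by (auto simp: atLeastAtMost_iff le_Suc_eq numeral_eq_Suc)
      next
        show "v 6 \<in> N \<Longrightarrow> v 7 \<in> N \<Longrightarrow> {v 6, v 7} \<notin> F" using vN[of 6] by simp
      qed
      then have "\<forall>s<5. \<forall>t<5. {v (3 + s), v (3 + t)} \<notin> F" by auto
    then show ?thesis by (rule window_P5[OF n(1) v_def])
  next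
    case v3: True
    have v2: "v 2 \<notin> N" using vN[of 2] v3 by (auto simp: numeral_eq_Suc)
    show ?thesis
    proof (cases "v 1 \<in> N")
      case False
      have "\<forall>s\<in>{1..1+4}. \<forall>t\<in>{1..1+4}. {v s, v t} \<notin> F"
      proof (rule noF_gen[where p = 3 and q = 3])
        show "\<And>s t. {v s, v t} \<in> F \<Longrightarrow> v s \<in> N \<and> v t \<in> N \<and> v s \<noteq> v t" by (rule noF)
        fix s assume "s \<in> {1..1+4}" "v s \<in> N"
        then show "s = 3 \<or> s = 3" using v4 v5 v2 False by (auto simp: atLeastAtMost_iff le_Suc_eq numeral_eq_Suc)
      next
        show "v 3 \<in> N \<Longrightarrow> v 3 \<in> N \<Longrightarrow> {v 3, v 3} \<notin> F" using F1 by simp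
      qed
      then have "\<forall>s<5. \<forall>t<5. {v (1 + s), v (1 + t)} \<notin> F" by auto
      then show ?thesis by (rule window_P5[OF n(1) v_def])
    next
      case v1: True
      have v0: "v 0 \<notin> N" using vN[of 0] v1 by auto
      show ?thesis
      proof (cases "{v 1, v 3} \<in> F")
        case False
        have "\<forall>s\<in>{0..0+4}. \<forall>t\<in>{0..0+4}. {v s, v t} \<notin> F"
      proof (rule noF_gen[where p = 1 and q = 3])
        show "\<And>s t. {v s, v t} \<in> F \<Longrightarrow> v s \<in> N \<and> v t \<in> N \<and> v s \<noteq> v t" by (rule noF)
        fix s assume "s \<in> {0..0+4}" "v s \<in> N"
        then show "s = 1 \<or> s = 3" using v4 v0 v2 by (auto simp: atLeastAtMost_iff le_Suc_eq numeral_eq_Suc)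
      next
        show "v 1 \<in> N \<Longrightarrow> v 3 \<in> N \<Longrightarrow> {v 1, v 3} \<notin> F" using False by simp
      qed
      then have "\<forall>s<5. \<forall>t<5. {v (0 + s), v (0 + t)} \<notin> F" by auto
        then show ?thesis by (rule window_P5[OF n(1) v_def])
      next
        case True
        have "\<forall>s\<in>{0,1,3,4,5}. \<forall>t\<in>{0,1,3,4,5}. ({v s, v t} \<in> F \<longleftrightarrow> (s = 1 \<and> t = 3) \<or> (s = 3 \<and> t = 1))"
        proof (intro ballI)
          fix s t assume s: "s \<in> {0,1,3,4,5::nat}" and t: "t \<in> {0,1,3,4,5::nat}"
          show "({v s, v t} \<in> F \<longleftrightarrow> (s = 1 \<and> t = 3) \<or> (s = 3 \<and> t = 1))"
          proof
            assume st: "{v s, v t} \<in> F"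
            from noF[OF st] have h: "v s \<in> N" "v t \<in> N" "v s \<noteq> v t" by auto
            have "s = 1 \<or> s = 3" using s h(1) v4 v5 v0 by auto
            moreover have "t = 1 \<or> t = 3" using t h(2) v4 v5 v0 by auto
            ultimately show "(s = 1 \<and> t = 3) \<or> (s = 3 \<and> t = 1)" using h(3) by auto
          next
            assume "(s = 1 \<and> t = 3) \<or> (s = 3 \<and> t = 1)"
            then show "{v s, v t} \<in> F" using True by (auto simp: insert_commute)
          qed
        qed
        then show ?thesis using path_Q[OF n(1) v_def] by blast
      qed
    qed
  qed
  show ?thesis using p2 p5 by blast
qed

lemma cycle_edge_cases:
  assumes "{x, y} \<in> snd (cycle n)"
  shows "\<exists>i<n. (x = i \<and> y = (i + 1) mod n) \<or> (y = i \<and> x = (i + 1) mod n)"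
  using assms unfolding cycle_def by (auto simp: doubleton_eq_iff)

definition dist_from :: "nat \<Rightarrow> nat \<Rightarrow> nat \<Rightarrow> nat" where
  "dist_from n m i = (if m < i then i - m else n - m + i)"

lemma dist_step:
  assumes "i < n" "m < n" "i \<noteq> m" "(i + 1) mod n \<noteq> m"
  shows "dist_from n m ((i + 1) mod n) = Suc (dist_from n m i)"
proof (cases "i + 1 < n")
  case True
  then have e: "(i + 1) mod n = i + 1" by simp
  show ?thesis using assms True unfolding e dist_from_def by auto
next
  case False
  then have i: "i = n - 1" using assms by simp
  then have e: "(i + 1) mod n = 0" using assms by simp
  have "m < i" using assms i e by auto
  then show ?thesis using assms i unfolding e dist_from_def by auto
qed

lemma cycle_sub_probe:
  assumes S: "S \<subset> fst (cycle n)"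
  shows "probe_free (induced (cycle n) S) twoP2 \<and> probe_free (induced (cycle n) S) path5"
proof -
  have fc: "fst (cycle n) = {0..<n}" by (simp add: cycle_def)
  obtain m where m: "m < n" "m \<notin> S" using psubset_imp_ex_mem[OF S] unfolding fc by auto
  have Sn: "S \<subseteq> {0..<n}" using S fc by auto
  define N where "N = {i \<in> S. even (dist_from n m i)}"
  define F where "F = {e. e \<subseteq> N \<and> card e = (2::nat)}"
  have par: "even (dist_from n m x) = odd (dist_from n m y)" if xy: "x \<in> S" "y \<in> S" "{x, y} \<in> snd (cycle n)" for x y
  proof -
    obtain i where i: "i < n" "(x = i \<and> y = (i + 1) mod n) \<or> (y = i \<and> x = (i + 1) mod n)"
      using cycle_edge_cases[OF xy(3)] by blast
    have "i \<noteq> m" "(i + 1) mod n \<noteq> m" using i xy(1,2) m(2) by auto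
    then have "dist_from n m ((i + 1) mod n) = Suc (dist_from n m i)" using dist_step i(1) m(1) by blast
    then show ?thesis using i(2) by auto
  qed
  have indep: "independent (induced (cycle n) S) N"
    unfolding independent_def induced_def N_def using par by auto
  have Fs: "F \<subseteq> {e. e \<subseteq> N \<and> card e = 2}" unfolding F_def by simp
  let ?G = "(fst (induced (cycle n) S), snd (induced (cycle n) S) \<union> F)"
  have cov: "\<forall>x y. {x,y} \<in> snd ?G \<longrightarrow> x \<in> N \<or> y \<in> N"
  proof (intro allI impI)
    fix x y assume "{x,y} \<in> snd ?G"
    then have "({x,y} \<in> snd (cycle n) \<and> x \<in> S \<and> y \<in> S) \<or> {x,y} \<in> F" unfolding induced_def by auto
    then show "x \<in> N \<or> y \<in> N" using par unfolding N_def F_def by auto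
  qed
  have cl: "\<forall>p\<in>N. \<forall>q\<in>N. p \<noteq> q \<longrightarrow> {p,q} \<in> snd ?G"
    unfolding F_def by auto
  show ?thesis unfolding probe_free_def using indep Fs split_free[OF cov cl] by blast
qed

definition adjL :: "(nat \<times> nat) list \<Rightarrow> nat \<Rightarrow> nat \<Rightarrow> bool" where
  "adjL L x y \<longleftrightarrow> (x, y) \<in> set L \<or> (y, x) \<in> set L"

definition edges_of :: "(nat \<times> nat) list \<Rightarrow> nat set set" where
  "edges_of L = (\<lambda>(a, b). {a, b}) ` set L"

lemma edges_of_iff: "{x, y} \<in> edges_of L \<longleftrightarrow> adjL L x y"
  unfolding edges_of_def adjL_def by (auto simp: doubleton_eq_iff)

definition p5check :: "nat list \<Rightarrow> (nat \<Rightarrow> nat \<Rightarrow> bool) \<Rightarrow> bool" where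
  "p5check V A \<longleftrightarrow> (\<forall>c\<in>set V. \<forall>b\<in>set (filter (A c) V).
     \<forall>d\<in>set (filter (\<lambda>d. A c d \<and> \<not> A b d \<and> d \<noteq> b) V).
     \<forall>a\<in>set (filter (\<lambda>a. A b a \<and> \<not> A a c \<and> \<not> A a d \<and> a \<noteq> c) V).
     \<forall>e\<in>set (filter (\<lambda>e. A d e \<and> \<not> A e c \<and> \<not> A e b) V). A a e \<or> a = e)"

lemma p5check_sound:
  assumes chk: "p5check V A" and fG: "fst G = set V"
    and adj: "\<forall>x\<in>fst G. \<forall>y\<in>fst G. ({x, y} \<in> snd G) = A x y"
  shows "H_free G path5"
  unfolding H_free_def
proof
  assume "\<exists>S\<subseteq>fst G. graph_iso (induced G S) path5"
  then obtain S where "S \<subseteq> fst G" "graph_iso (induced G S) path5" by blast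
  from embed_of_iso[OF this] obtain x where inj: "inj_on x (fst path5)" and
    sub: "x ` fst path5 \<subseteq> fst G" and
    e: "\<forall>i\<in>fst path5. \<forall>j\<in>fst path5. ({x i, x j} \<in> snd G) = ({i, j} \<in> snd path5)" by blast
  have f: "fst path5 = {0..<5}" by (simp add: path5_def)
  have xin: "x i \<in> set V" if "i < 5" for i using sub that fG f by auto
  have e': "A (x i) (x j) = (i = Suc j \<or> j = Suc i)" if "i < 5" "j < 5" for i j
  proof -
    have 1: "({x i, x j} \<in> snd G) = ({i, j} \<in> snd path5)" using e that unfolding f by auto
    have 2: "({x i, x j} \<in> snd G) = A (x i) (x j)" using adj xin[OF that(1)] xin[OF that(2)] fG by auto
    show ?thesis using 1 2 path5_edge[OF that] by simp
  qed
  have d: "x 1 \<noteq> x 3" "x 0 \<noteq> x 2" "x 0 \<noteq> x 4"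
    using inj_onD[OF inj[unfolded f], of 1 3] inj_onD[OF inj[unfolded f], of 0 2]
      inj_onD[OF inj[unfolded f], of 0 4] by auto
  have "A (x 0) (x 4) \<or> x 0 = x 4"
  proof -
    have h: "\<forall>c\<in>set V. \<forall>b\<in>set (filter (A c) V).
     \<forall>d\<in>set (filter (\<lambda>d. A c d \<and> \<not> A b d \<and> d \<noteq> b) V).
     \<forall>a\<in>set (filter (\<lambda>a. A b a \<and> \<not> A a c \<and> \<not> A a d \<and> a \<noteq> c) V).
     \<forall>e\<in>set (filter (\<lambda>e. A d e \<and> \<not> A e c \<and> \<not> A e b) V). A a e \<or> a = e"
      using chk unfolding p5check_def .
    have x: "x 0 \<in> set V" "x 1 \<in> set V" "x 2 \<in> set V" "x 3 \<in> set V" "x 4 \<in> set V" using xin by auto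
    have a: "A (x 2) (x 1)" "A (x 2) (x 3)" "\<not> A (x 1) (x 3)" "A (x 1) (x 0)" "\<not> A (x 0) (x 2)"
      "\<not> A (x 0) (x 3)" "A (x 3) (x 4)" "\<not> A (x 4) (x 2)" "\<not> A (x 4) (x 1)"
      using e' by (auto simp: numeral_eq_Suc)
    show ?thesis using h[rule_format, of "x 2" "x 1" "x 3" "x 0" "x 4"] x a d by auto
  qed
  then show False using e' d by simp
qed

lemma induced_induced: "B \<subseteq> A \<Longrightarrow> induced (induced G A) B = induced G B"
  unfolding induced_def by auto

lemma probe_free_induced:
  assumes pf: "probe_free G H" and S: "S \<subseteq> fst G"
  shows "probe_free (induced G S) H"
proof -
  obtain N F where ind: "independent G N" and Fs: "F \<subseteq> {e. e \<subseteq> N \<and> card e = 2}"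
    and hf: "H_free (fst G, snd G \<union> F) H" using pf unfolding probe_free_def by blast
  let ?N = "N \<inter> S" and ?F = "{e \<in> F. e \<subseteq> S}"
  have i2: "independent (induced G S) ?N" using ind unfolding independent_def induced_def by auto
  have F2: "?F \<subseteq> {e. e \<subseteq> ?N \<and> card e = 2}" using Fs by auto
  have eq: "induced (fst (induced G S), snd (induced G S) \<union> ?F) T = induced (fst G, snd G \<union> F) T"
    if "T \<subseteq> S" for T using that unfolding induced_def by auto
  have hf2: "H_free (fst (induced G S), snd (induced G S) \<union> ?F) H"
    using hf S eq unfolding H_free_def by (auto simp: induced_def)
  show ?thesis unfolding probe_free_def using i2 F2 hf2 by blast
qed

lemma path5_embed:
  assumes V: "a \<in> fst G" "b \<in> fst G" "c \<in> fst G" "d \<in> fst G" "e \<in> fst G"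
    and dist: "distinct [a, b, c, d, e]"
    and E: "{a, b} \<in> snd G" "{b, c} \<in> snd G" "{c, d} \<in> snd G" "{d, e} \<in> snd G"
    and NE: "{a, c} \<notin> snd G" "{a, d} \<notin> snd G" "{a, e} \<notin> snd G" "{b, d} \<notin> snd G"
      "{b, e} \<notin> snd G" "{c, e} \<notin> snd G"
    and S: "{a} \<notin> snd G" "{b} \<notin> snd G" "{c} \<notin> snd G" "{d} \<notin> snd G" "{e} \<notin> snd G"
  shows "\<not> H_free G path5"
proof (rule not_free_by_embed[where g = "\<lambda>i. [a, b, c, d, e] ! i"])
  have f: "fst path5 = {0..<5}" by (simp add: path5_def)
  have x5: "x < 5 \<longleftrightarrow> x = 0 \<or> x = 1 \<or> x = 2 \<or> x = 3 \<or> x = 4" for x :: nat by auto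
  show "inj_on (\<lambda>i. [a, b, c, d, e] ! i) (fst path5)"
    unfolding f inj_on_def atLeastLessThan_iff using dist by (auto simp: x5)
  show "(\<lambda>i. [a, b, c, d, e] ! i) ` fst path5 \<subseteq> fst G"
    unfolding f using V by (auto simp: x5)
  show "\<forall>x\<in>fst path5. \<forall>y\<in>fst path5. ({[a, b, c, d, e] ! x, [a, b, c, d, e] ! y} \<in> snd G) = ({x, y} \<in> snd path5)"
  proof (intro ballI)
    fix x y :: nat assume "x \<in> fst path5" "y \<in> fst path5"
    then have xs: "x < 5" "y < 5" by (auto simp: f)
    have "({[a, b, c, d, e] ! x, [a, b, c, d, e] ! y} \<in> snd G) = (x = Suc y \<or> y = Suc x)"
      using xs(1) xs(2) unfolding x5
      apply (elim disjE)
      by (simp_all add: E NE S insert_commute)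
    then show "({[a, b, c, d, e] ! x, [a, b, c, d, e] ! y} \<in> snd G) = ({x, y} \<in> snd path5)"
      using path5_edge[OF xs] by simp
  qed
qed

lemma twoP2_embed:
  assumes V: "a \<in> fst G" "b \<in> fst G" "c \<in> fst G" "d \<in> fst G"
    and dist: "distinct [a, b, c, d]"
    and E: "{a, b} \<in> snd G" "{c, d} \<in> snd G"
    and NE: "{a, c} \<notin> snd G" "{a, d} \<notin> snd G" "{b, c} \<notin> snd G" "{b, d} \<notin> snd G"
    and S: "{a} \<notin> snd G" "{b} \<notin> snd G" "{c} \<notin> snd G" "{d} \<notin> snd G"
  shows "\<not> H_free G twoP2"
proof (rule not_free_by_embed[where g = "\<lambda>i. [a, b, c, d] ! i"])
  have f: "fst twoP2 = {0,1,2,3}" by (simp add: twoP2_def)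
  show "inj_on (\<lambda>i. [a, b, c, d] ! i) (fst twoP2)"
    unfolding f inj_on_def using dist by auto
  show "(\<lambda>i. [a, b, c, d] ! i) ` fst twoP2 \<subseteq> fst G"
    unfolding f using V by auto
  show "\<forall>x\<in>fst twoP2. \<forall>y\<in>fst twoP2. ({[a, b, c, d] ! x, [a, b, c, d] ! y} \<in> snd G) = ({x, y} \<in> snd twoP2)"
  proof (intro ballI)
    fix x y :: nat assume "x \<in> fst twoP2" "y \<in> fst twoP2"
    then have xs: "x = 0 \<or> x = 1 \<or> x = 2 \<or> x = 3" "y = 0 \<or> y = 1 \<or> y = 2 \<or> y = 3" by (auto simp: f)
    have "({[a, b, c, d] ! x, [a, b, c, d] ! y} \<in> snd G) = ((x = 0 \<and> y = 1) \<or> (x = 1 \<and> y = 0) \<or> (x = 2 \<and> y = 3) \<or> (x = 3 \<and> y = 2))"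
      using xs(1) xs(2)
      apply (elim disjE)
      by (simp_all add: E NE S insert_commute)
    then show "({[a, b, c, d] ! x, [a, b, c, d] ! y} \<in> snd G) = ({x, y} \<in> snd twoP2)"
      using twoP2_edge by simp
  qed
qed

lemma cycle_nbrs:
  assumes "u < n" "v < n" "{u, v} \<in> snd (cycle n)"
  shows "v = (u + 1) mod n \<or> v = (u + n - 1) mod n"
proof -
  have "v = (u + 1) mod n \<or> u = (v + 1) mod n" using cycle_edge_iff assms by blast
  then show ?thesis
  proof
    assume h: "u = (v + 1) mod n"
    show ?thesis
    proof (cases "v + 1 < n")
      case True then have "u = v + 1" using h by simp
      then show ?thesis using assms by simp
    next
      case False then have "v = n - 1" using assms by simp
      then have "u = 0" using h assms by simp
      then show ?thesis using \<open>v = n - 1\<close> assms by simp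
    qed
  qed simp
qed

lemma not_iso_cycle_deg3:
  assumes V: "u \<in> fst G" "p \<in> fst G" "q \<in> fst G" "r \<in> fst G"
    and dist: "distinct [p, q, r]"
    and E: "{u, p} \<in> snd G" "{u, q} \<in> snd G" "{u, r} \<in> snd G"
  shows "\<not> graph_iso G (cycle n)"
proof
  assume "graph_iso G (cycle n)"
  then obtain f where bf: "bij_betw f (fst G) (fst (cycle n))"
    and e: "\<forall>x\<in>fst G. \<forall>y\<in>fst G. {x, y} \<in> snd G \<longleftrightarrow> {f x, f y} \<in> snd (cycle n)"
    unfolding graph_iso_def by blast
  have fc: "fst (cycle n) = {0..<n}" by (simp add: cycle_def)
  have lt: "\<And>x. x \<in> fst G \<Longrightarrow> f x < n" using bf fc bij_betwE by fastforce
  have inj: "inj_on f (fst G)" using bf bij_betw_def by blast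
  have nb: "f y = (f u + 1) mod n \<or> f y = (f u + n - 1) mod n" if "y \<in> fst G" "{u, y} \<in> snd G" for y
    using cycle_nbrs[OF lt[OF V(1)] lt[OF that(1)]] e V(1) that by blast
  have "f p \<noteq> f q" "f p \<noteq> f r" "f q \<noteq> f r" using inj dist V unfolding inj_on_def by auto
  then show False using nb[OF V(2) E(1)] nb[OF V(3) E(2)] nb[OF V(4) E(3)] by auto
qed

lemma cycle_is_graph: "n \<ge> 3 \<Longrightarrow> is_graph (cycle n)"
  unfolding is_graph_def cycle_def
proof (auto)
  fix i assume n: "3 \<le> n" and i: "i < n"
  show "card {i, Suc i mod n} = 2"
  proof (cases "Suc i < n")
    case True then show ?thesis by simp
  next
    case False then have "i = n - 1" using i by auto
    then have "Suc i = n" using n by simp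
    then have "Suc i mod n = 0" by simp
    moreover have "i \<noteq> 0" using \<open>i = n - 1\<close> n by simp
    ultimately show ?thesis by simp
  qed
qed

lemma min_forb_cycle:
  assumes n: "n \<ge> 7" "odd n"
  shows "min_forbidden_probe twoP2 (cycle n) \<and> min_forbidden_probe path5 (cycle n)"
proof -
  have fc: "fst (cycle n) = {0..<n}" by (simp add: cycle_def)
  have np: "\<not> probe_free (cycle n) path5 \<and> \<not> probe_free (cycle n) twoP2"
    unfolding probe_free_def fc using cycle_not_probe[OF n] by blast
  show ?thesis unfolding min_forbidden_probe_def
    using np cycle_is_graph[of n] n cycle_sub_probe by auto
qed

lemma edges_of_single: "(\<forall>(a, b)\<in>set L. a \<noteq> b) \<Longrightarrow> {x} \<notin> edges_of L"
  unfolding edges_of_def by auto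

lemma edges_of_single_iff: "{x} \<in> edges_of L \<longleftrightarrow> (x, x) \<in> set L"
  unfolding edges_of_def by (auto simp: doubleton_eq_iff)

lemma is_graph_edges_of:
  assumes "\<forall>(a, b)\<in>set L. a \<noteq> b \<and> a \<in> V \<and> b \<in> V" "finite V"
  shows "is_graph (V, edges_of L)"
  using assms unfolding is_graph_def edges_of_def by auto

lemma min_forb_gen:
  assumes np: "\<not> probe_free G H"
    and ig: "is_graph G"
    and sub: "\<And>w. w \<in> fst G \<Longrightarrow> probe_free (induced G (fst G - {w})) H"
  shows "min_forbidden_probe H G"
  unfolding min_forbidden_probe_def
proof (intro conjI allI impI)
  show "is_graph G" by (rule ig)
  show "\<not> probe_free G H" by (rule np)
  fix S assume S: "S \<subset> fst G"
  then obtain w where w: "w \<in> fst G" "w \<notin> S" using psubset_imp_ex_mem by blast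
  have "S \<subseteq> fst (induced G (fst G - {w}))" using S w by (auto simp: induced_def)
  from probe_free_induced[OF sub[OF w(1)] this]
  have "S \<subseteq> fst G - {w}" using S w by auto
  then show "probe_free (induced G S) H" using induced_induced[of S "fst G - {w}" G] probe_free_induced[OF sub[OF w(1)]]
    by (metis \<open>S \<subseteq> fst (induced G (fst G - {w}))\<close>)
qed

lemma sub_witness_p5:
  assumes V: "set V = fst G - {w}" and G: "snd G = edges_of L"
    and N: "N \<subseteq> set V" "\<forall>x\<in>N. \<forall>y\<in>N. \<not> adjL L x y"
    and LF: "\<forall>(a, b)\<in>set LF. a \<in> N \<and> b \<in> N \<and> a \<noteq> b"
    and chk: "p5check V (\<lambda>x y. adjL L x y \<or> adjL LF x y)"
  shows "probe_free (induced G (fst G - {w})) path5"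
  unfolding probe_free_def
proof (intro exI conjI)
  show "independent (induced G (fst G - {w})) N"
    using N V G unfolding independent_def induced_def by (auto simp: edges_of_iff)
  show "edges_of LF \<subseteq> {e. e \<subseteq> N \<and> card e = 2}"
    using LF unfolding edges_of_def by auto
  show "H_free (fst (induced G (fst G - {w})), snd (induced G (fst G - {w})) \<union> edges_of LF) path5"
  proof (rule p5check_sound[OF chk])
    show "fst (fst (induced G (fst G - {w})), snd (induced G (fst G - {w})) \<union> edges_of LF) = set V"
      using V by (simp add: induced_def)
    show "\<forall>x\<in>fst (fst (induced G (fst G - {w})), snd (induced G (fst G - {w})) \<union> edges_of LF).
       \<forall>y\<in>fst (fst (induced G (fst G - {w})), snd (induced G (fst G - {w})) \<union> edges_of LF).
       ({x, y} \<in> snd (fst (induced G (fst G - {w})), snd (induced G (fst G - {w})) \<union> edges_of LF)) =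
       (adjL L x y \<or> adjL LF x y)"
      using G by (auto simp: induced_def edges_of_iff)
  qed
qed

lemma sub_witness_split:
  assumes G: "snd G = edges_of L"
    and N: "N \<subseteq> fst G - {w}" "\<forall>x\<in>N. \<forall>y\<in>N. \<not> adjL L x y"
    and LF: "\<forall>(a, b)\<in>set LF. a \<in> N \<and> b \<in> N \<and> a \<noteq> b"
    and cov: "\<forall>x y. (adjL L x y \<and> x \<noteq> w \<and> y \<noteq> w) \<or> adjL LF x y \<longrightarrow> x \<in> K \<or> y \<in> K"
    and cl: "\<forall>p\<in>K. \<forall>q\<in>K. p \<noteq> q \<longrightarrow> adjL L p q \<or> adjL LF p q"
    and K: "K \<subseteq> fst G - {w}"
  shows "probe_free (induced G (fst G - {w})) twoP2"
  unfolding probe_free_def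
proof (intro exI conjI)
  show "independent (induced G (fst G - {w})) N"
    using N G unfolding independent_def induced_def by (auto simp: edges_of_iff)
  show "edges_of LF \<subseteq> {e. e \<subseteq> N \<and> card e = 2}"
    using LF unfolding edges_of_def by auto
  have sF: "e \<in> edges_of LF \<Longrightarrow> \<exists>x y. e = {x, y}" for e unfolding edges_of_def by auto
  have sG: "e \<in> edges_of L \<Longrightarrow> \<exists>x y. e = {x, y}" for e unfolding edges_of_def by auto
  show "H_free (fst (induced G (fst G - {w})), snd (induced G (fst G - {w})) \<union> edges_of LF) twoP2"
  proof (rule split_free(1)[where K = K])
    show "\<forall>x y. {x, y} \<in> snd (fst (induced G (fst G - {w})), snd (induced G (fst G - {w})) \<union> edges_of LF) \<longrightarrow>
       x \<in> K \<or> y \<in> K"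
      using cov G by (auto simp: induced_def edges_of_iff)
    show "\<forall>p\<in>K. \<forall>q\<in>K. p \<noteq> q \<longrightarrow> {p, q} \<in> snd (fst (induced G (fst G - {w})), snd (induced G (fst G - {w})) \<union> edges_of LF)"
      using cl G K by (auto simp: induced_def edges_of_iff)
  qed
qed

definition LK :: "(nat \<times> nat) list" where "LK = [(0,1),(1,2),(0,2),(3,4)]"
definition GK :: "nat graph" where "GK = ({0..<5}, edges_of LK)"

definition LA :: "(nat \<times> nat) list" where
  "LA = [(0,2),(0,5),(0,6),(1,4),(1,6),(2,3),(2,4),(2,5),(3,4),(3,5)]"
definition GA :: "nat graph" where "GA = ({0..<7}, edges_of LA)"

lemma F_facts:
  assumes Fs: "F \<subseteq> {e. e \<subseteq> N \<and> card e = 2}"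
  shows "\<And>x y. x \<notin> N \<Longrightarrow> {x, y} \<notin> F" "\<And>x y. y \<notin> N \<Longrightarrow> {x, y} \<notin> F" "\<And>x. {x} \<notin> F"
  using Fs by auto

lemma GK_not_probe: "\<not> probe_free GK twoP2"
  unfolding probe_free_def
proof (intro notI, elim exE conjE)
  fix N F assume ind: "independent GK N" and Fs: "F \<subseteq> {e. e \<subseteq> N \<and> card e = 2}"
    and hf: "H_free (fst GK, snd GK \<union> F) twoP2"
  note Ff = F_facts[OF Fs]
  have indA: "\<And>x y. x \<in> N \<Longrightarrow> y \<in> N \<Longrightarrow> \<not> adjL LK x y"
    using ind unfolding independent_def GK_def by (auto simp: edges_of_iff)
  have E1: "\<And>x. {x} \<notin> edges_of LK" by (rule edges_of_single) (simp add: LK_def)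
  have "\<not> H_free (fst GK, snd GK \<union> F) twoP2"
  proof (cases "0 \<notin> N \<and> (1::nat) \<notin> N")
    case True
    then show ?thesis
      by (intro twoP2_embed[where a = 0 and b = 1 and c = 3 and d = 4])
         (auto simp: GK_def edges_of_iff adjL_def LK_def Ff edges_of_single_iff)
  next
    case c1: False
    show ?thesis
    proof (cases "1 \<notin> N \<and> (2::nat) \<notin> N")
      case True
      then show ?thesis
        by (intro twoP2_embed[where a = 1 and b = 2 and c = 3 and d = 4])
           (auto simp: GK_def edges_of_iff adjL_def LK_def Ff edges_of_single_iff)
    next
      case False
      have "0 \<notin> N" "(2::nat) \<notin> N" using c1 False indA[of 0 1] indA[of 1 2] indA[of 0 2]
        by (auto simp: adjL_def LK_def)
      then show ?thesis
        by (intro twoP2_embed[where a = 0 and b = 2 and c = 3 and d = 4])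
           (auto simp: GK_def edges_of_iff adjL_def LK_def Ff edges_of_single_iff)
    qed
  qed
  then show False using hf by contradiction
qed

lemma GA_not_probe: "\<not> probe_free GA path5"
  unfolding probe_free_def
proof (intro notI, elim exE conjE)
  fix N F assume ind: "independent GA N" and Fs: "F \<subseteq> {e. e \<subseteq> N \<and> card e = 2}"
    and hf: "H_free (fst GA, snd GA \<union> F) path5"
  note Ff = F_facts[OF Fs]
  have indA: "\<And>x y. x \<in> N \<Longrightarrow> y \<in> N \<Longrightarrow> \<not> adjL LA x y"
    using ind unfolding independent_def GA_def by (auto simp: edges_of_iff)
  have E1: "\<And>x. {x} \<notin> edges_of LA" by (rule edges_of_single) (simp add: LA_def)
  have "\<not> H_free (fst GA, snd GA \<union> F) path5"
  proof (cases "0 \<in> N")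
    case True
    then have "5 \<notin> N" "2 \<notin> N" "6 \<notin> N" using indA[of 0 5] indA[of 0 2] indA[of 0 6] by (auto simp: adjL_def LA_def)
    then show ?thesis
      by (intro path5_embed[where a = 5 and b = 2 and c = 4 and d = 1 and e = 6])
         (auto simp: GA_def edges_of_iff adjL_def LA_def Ff edges_of_single_iff)
  next
    case n0: False
    show ?thesis
    proof (cases "1 \<in> N")
      case True
      then have "6 \<notin> N" "4 \<notin> N" using indA[of 1 6] indA[of 1 4] by (auto simp: adjL_def LA_def)
      then show ?thesis using n0
        by (intro path5_embed[where a = 4 and b = 3 and c = 5 and d = 0 and e = 6])
           (auto simp: GA_def edges_of_iff adjL_def LA_def Ff edges_of_single_iff)
    next
      case n1: False
      show ?thesis
      proof (cases "4 \<in> N")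
        case True
        then have "2 \<notin> N" "3 \<notin> N" using indA[of 4 2] indA[of 4 3] by (auto simp: adjL_def LA_def)
        then show ?thesis using n0 n1
          by (intro path5_embed[where a = 1 and b = 6 and c = 0 and d = 2 and e = 3])
             (auto simp: GA_def edges_of_iff adjL_def LA_def Ff edges_of_single_iff)
      next
        case False
        then show ?thesis using n0 n1
          by (intro path5_embed[where a = 0 and b = 5 and c = 3 and d = 4 and e = 1])
             (auto simp: GA_def edges_of_iff adjL_def LA_def Ff edges_of_single_iff)
      qed
    qed
  qed
  then show False using hf by contradiction
qed

lemma GK_graph: "is_graph GK"
  unfolding GK_def by (rule is_graph_edges_of) (auto simp: LK_def)

lemma GA_graph: "is_graph GA"
  unfolding GA_def by (rule is_graph_edges_of) (auto simp: LA_def)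

lemma fGK: "fst GK = {0..<5}" and sGK: "snd GK = edges_of LK" by (simp_all add: GK_def)
lemma fGA: "fst GA = {0..<7}" and sGA: "snd GA = edges_of LA" by (simp_all add: GA_def)

lemma GK_min: "min_forbidden_probe twoP2 GK"
proof (rule min_forb_gen[OF GK_not_probe GK_graph])
  fix w assume "w \<in> fst GK"
  then have "w = 0 \<or> w = 1 \<or> w = 2 \<or> w = 3 \<or> w = 4" by (auto simp: fGK)
  then show "probe_free (induced GK (fst GK - {w})) twoP2"
  proof (elim disjE)
    assume w: "w = 0"
    show ?thesis unfolding w
      by (rule sub_witness_split[OF sGK, where N = "{1,3}" and LF = "[(1,3)]" and K = "{1,3}"])
         (auto simp: fGK adjL_def LK_def)
  next
    assume w: "w = 1"
    show ?thesis unfolding w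
      by (rule sub_witness_split[OF sGK, where N = "{0,3}" and LF = "[(0,3)]" and K = "{0,3}"])
         (auto simp: fGK adjL_def LK_def)
  next
    assume w: "w = 2"
    show ?thesis unfolding w
      by (rule sub_witness_split[OF sGK, where N = "{0,3}" and LF = "[(0,3)]" and K = "{0,3}"])
         (auto simp: fGK adjL_def LK_def)
  next
    assume w: "w = 3"
    show ?thesis unfolding w
      by (rule sub_witness_split[OF sGK, where N = "{}" and LF = "[]" and K = "{0,1,2}"])
         (auto simp: fGK adjL_def LK_def)
  next
    assume w: "w = 4"
    show ?thesis unfolding w
      by (rule sub_witness_split[OF sGK, where N = "{}" and LF = "[]" and K = "{0,1,2}"])
         (auto simp: fGK adjL_def LK_def)
  qed
qed

lemma GA_min: "min_forbidden_probe path5 GA"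
proof (rule min_forb_gen[OF GA_not_probe GA_graph])
  fix w assume "w \<in> fst GA"
  then have "w = 0 \<or> w = 1 \<or> w = 2 \<or> w = 3 \<or> w = 4 \<or> w = 5 \<or> w = 6" by (auto simp: fGA)
  then show "probe_free (induced GA (fst GA - {w})) path5"
  proof (elim disjE)
    assume w: "w = 0"
    show ?thesis unfolding w
    proof (rule sub_witness_p5[OF _ sGA, where V = "[1,2,3,4,5,6]" and N = "{1,5}" and LF = "[(1,5)]"])
      show "p5check [1,2,3,4,5,6] (\<lambda>x y. adjL LA x y \<or> adjL [(1,5)] x y)"
        by (simp add: p5check_def adjL_def LA_def)
    qed (auto simp: fGA adjL_def LA_def)
  next
    assume w: "w = 1"
    show ?thesis unfolding w
    proof (rule sub_witness_p5[OF _ sGA, where V = "[0,2,3,4,5,6]" and N = "{0,3}" and LF = "[(0,3)]"])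
      show "p5check [0,2,3,4,5,6] (\<lambda>x y. adjL LA x y \<or> adjL [(0,3)] x y)"
        by (simp add: p5check_def adjL_def LA_def)
    qed (auto simp: fGA adjL_def LA_def)
  next
    assume w: "w = 2"
    show ?thesis unfolding w
    proof (rule sub_witness_p5[OF _ sGA, where V = "[0,1,3,4,5,6]" and N = "{0,1,3}" and LF = "[(0,1),(0,3),(1,3)]"])
      show "p5check [0,1,3,4,5,6] (\<lambda>x y. adjL LA x y \<or> adjL [(0,1),(0,3),(1,3)] x y)"
        by (simp add: p5check_def adjL_def LA_def)
    qed (auto simp: fGA adjL_def LA_def)
  next
    assume w: "w = 3"
    show ?thesis unfolding w
    proof (rule sub_witness_p5[OF _ sGA, where V = "[0,1,2,4,5,6]" and N = "{1,5}" and LF = "[(1,5)]"])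
      show "p5check [0,1,2,4,5,6] (\<lambda>x y. adjL LA x y \<or> adjL [(1,5)] x y)"
        by (simp add: p5check_def adjL_def LA_def)
    qed (auto simp: fGA adjL_def LA_def)
  next
    assume w: "w = 4"
    show ?thesis unfolding w
    proof (rule sub_witness_p5[OF _ sGA, where V = "[0,1,2,3,5,6]" and N = "{0,1}" and LF = "[(0,1)]"])
      show "p5check [0,1,2,3,5,6] (\<lambda>x y. adjL LA x y \<or> adjL [(0,1)] x y)"
        by (simp add: p5check_def adjL_def LA_def)
    qed (auto simp: fGA adjL_def LA_def)
  next
    assume w: "w = 5"
    show ?thesis unfolding w
    proof (rule sub_witness_p5[OF _ sGA, where V = "[0,1,2,3,4,6]" and N = "{0,1}" and LF = "[(0,1)]"])
      show "p5check [0,1,2,3,4,6] (\<lambda>x y. adjL LA x y \<or> adjL [(0,1)] x y)"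
        by (simp add: p5check_def adjL_def LA_def)
    qed (auto simp: fGA adjL_def LA_def)
  next
    assume w: "w = 6"
    show ?thesis unfolding w
    proof (rule sub_witness_p5[OF _ sGA, where V = "[0,1,2,3,4,5]" and N = "{0,3}" and LF = "[(0,3)]"])
      show "p5check [0,1,2,3,4,5] (\<lambda>x y. adjL LA x y \<or> adjL [(0,3)] x y)"
        by (simp add: p5check_def adjL_def LA_def)
    qed (auto simp: fGA adjL_def LA_def)
  qed
qed

theorem mainTheorem11:
  shows "(\<forall>k\<ge>3. min_forbidden_probe twoP2 (cycle (2 * k + 1)))
       \<and> (\<exists>G. min_forbidden_probe twoP2 G \<and> (\<forall>k\<ge>3. \<not> graph_iso G (cycle (2 * k + 1))))
       \<and> (\<forall>k\<ge>3. min_forbidden_probe path5 (cycle (2 * k + 1)))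
       \<and> (\<exists>G. min_forbidden_probe path5 G \<and> (\<forall>k\<ge>3. \<not> graph_iso G (cycle (2 * k + 1))))"
proof -
  have c: "min_forbidden_probe twoP2 (cycle (2*k+1)) \<and> min_forbidden_probe path5 (cycle (2*k+1))"
    if "k \<ge> 3" for k
    using min_forb_cycle[of "2*k+1"] that by auto
  have k1: "\<not> graph_iso GK (cycle (2*k+1))" if "k \<ge> 3" for k
  proof
    assume "graph_iso GK (cycle (2*k+1))"
    then obtain f where "bij_betw f (fst GK) (fst (cycle (2*k+1)))" unfolding graph_iso_def by blast
    then have "card (fst GK) = card (fst (cycle (2*k+1)))" by (rule bij_betw_same_card)
    then show False using that by (simp add: fGK cycle_def)
  qed
  have k2: "\<not> graph_iso GA (cycle (2*k+1))" for k
    by (rule not_iso_cycle_deg3[where u = 2 and p = 0 and q = 3 and r = 4])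
       (auto simp: fGA sGA edges_of_iff adjL_def LA_def)
  show ?thesis using c k1 k2 GK_min GA_min by blast
qed

end
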